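(* Consider the continuous-stage Runge–Kutta–Nyström (csRKN) method with coefficients $(\bar{A}_{\tau,\sigma},\bar{B}_\tau,B_\tau,C_\tau)$ applied to $q''=f(t,q)$. Suppose that for all $\tau,\sigma\in[0,1]$ \begin{align*} C_\tau&=1-C_{1-\tau},\\ \bar{A}_{\tau,\sigma}&=B_{1-\sigma}(1-C_{1-\tau})-\bar{B}_{1-\sigma}+\bar{A}_{1-\tau,1-\sigma},\\ \bar{B}_\tau&=B_{1-\tau}-\bar{B}_{1-\tau},\\ B_\tau&=B_{1-\tau}. \end{align*} Then the csRKN method is symmetric.
   Context: Consider the initial value problem $q''=f(t,q)$, $q(t_0)=q_0$, $q'(t_0)=q'_0$, where $f:\mathbb{R}\times\mathbb{R}^d\to\mathbb{R}^d$ is smooth. Let $\bar{A}_{\tau,\sigma}$ be a (sufficiently regular, e.g. integrable/continuous) real function of $\tau,\sigma\in[0,1]$ and $\bar{B}_\tau,B_\tau,C_\tau$ real functions of $\tau\in[0,1]$. The csRKN method with step size $h$ maps $(q_0,q'_0)$ to $(q_1,q'_1)$ by $$Q_\tau=q_0+hC_\tau q'_0+h^2\int_0^1\bar{A}_{\tau,\sigma}f(t_0+C_\sigma h,Q_\sigma)\,d\sigma,\quad \tau\in[0,1],$$ $$q_1=q_0+hq'_0+h^2\int_0^1\bar{B}_\tau f(t_0+C_\tau h,Q_\tau)\,d\tau,\qquad q'_1=q'_0+h\int_0^1 B_\tau f(t_0+C_\tau h,Q_\tau)\,d\tau,$$ with $t_1=t_0+h$. A one-step method $\Phi_h$ is called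 symmetric if $\Phi_h^*=\Phi_h$, where the adjoint method is $\Phi_h^*=\Phi_{-h}^{-1}$; equivalently, exchanging $h\leftrightarrow -h$, $(q_0,q'_0)\leftrightarrow(q_1,q'_1)$ and $t_0\leftrightarrow t_1$ in the defining equations yields the same method. *)

theory Defs
  imports "HOL-Analysis.Analysis"
begin

text \<open>Since the method is implicit, it is modelled as a relation: there exists a
  (continuous) stage function Q on [0,1] satisfying the stage equations.\<close>
definition csRKN_step ::
  "(real \<Rightarrow> real \<Rightarrow> real) \<Rightarrow> (real \<Rightarrow> real) \<Rightarrow> (real \<Rightarrow> real) \<Rightarrow> (real \<Rightarrow> real)
   \<Rightarrow> (real \<Rightarrow> 'a::euclidean_space \<Rightarrow> 'a) \<Rightarrow> real \<Rightarrow> real \<Rightarrow> 'a \<Rightarrow> 'a \<Rightarrow> 'a \<Rightarrow> 'a \<Rightarrow> bool"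
where
  "csRKN_step Abar Bbar B C f h t0 q0 p0 q1 p1 \<longleftrightarrow>
     (\<exists>Q :: real \<Rightarrow> 'a.
        continuous_on {0..1} Q \<and>
        (\<forall>\<tau>\<in>{0..1}. Q \<tau> = q0 + (h * C \<tau>) *\<^sub>R p0
            + h\<^sup>2 *\<^sub>R integral {0..1} (\<lambda>\<sigma>. Abar \<tau> \<sigma> *\<^sub>R f (t0 + C \<sigma> * h) (Q \<sigma>))) \<and>
        q1 = q0 + h *\<^sub>R p0
            + h\<^sup>2 *\<^sub>R integral {0..1} (\<lambda>\<tau>. Bbar \<tau> *\<^sub>R f (t0 + C \<tau> * h) (Q \<tau>)) \<and>
        p1 = p0 + h *\<^sub>R integral {0..1} (\<lambda>\<tau>. B \<tau> *\<^sub>R f (t0 + C \<tau> * h) (Q \<tau>)))"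

text \<open>Symmetry: the method coincides with its adjoint \<Phi>_{-h}^{-1}, i.e. exchanging
  h and -h, (q0,p0) and (q1,p1), t0 and t1 = t0 + h gives the same method.\<close>
definition csRKN_symmetric ::
  "(real \<Rightarrow> real \<Rightarrow> real) \<Rightarrow> (real \<Rightarrow> real) \<Rightarrow> (real \<Rightarrow> real) \<Rightarrow> (real \<Rightarrow> real)
   \<Rightarrow> (real \<Rightarrow> 'a::euclidean_space \<Rightarrow> 'a) \<Rightarrow> bool"
where
  "csRKN_symmetric Abar Bbar B C f \<longleftrightarrow>
     (\<forall>h t0 q0 p0 q1 p1.
        csRKN_step Abar Bbar B C f h t0 q0 p0 q1 p1 \<longleftrightarrow>
        csRKN_step Abar Bbar B C f (- h) (t0 + h) q1 p1 q0 p0)"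

end

theory Submission
  imports Defs
begin

lemma refl01:
  fixes g :: "real \<Rightarrow> 'a::euclidean_space"
  assumes "g integrable_on {0..1}"
  shows "integral {0..1} (\<lambda>s. g (1 - s)) = integral {0..1} g"
proof -
  have "(g has_integral integral {0..1} g) (cbox 0 1)" using assms by (simp add: integrable_integral)
  from has_integral_affinity[OF this, of "-1" 1]
  have "((\<lambda>x. g (1 - x)) has_integral integral {0..1} g) ((\<lambda>x. - x + 1) ` cbox 0 1)" by simp
  moreover have "(\<lambda>x::real. - x + 1) ` cbox 0 1 = {0..1}"
    by (auto simp: image_iff intro!: bexI[where x="1 - _"])
  ultimately show ?thesis by (simp add: integral_unique)
qed

lemma one_dir:
  fixes Abar :: "real \<Rightarrow> real \<Rightarrow> real" and Bbar B C :: "real \<Rightarrow> real"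
    and f :: "real \<Rightarrow> 'a::euclidean_space \<Rightarrow> 'a"
  assumes f_cont: "continuous_on UNIV (\<lambda>(t, x). f t x)"
    and A_cont: "\<forall>\<tau>\<in>{0..1}. continuous_on {0..1} (Abar \<tau>)"
    and Bbar_cont: "continuous_on {0..1} Bbar"
    and B_cont: "continuous_on {0..1} B"
    and C_cont: "continuous_on {0..1} C"
    and hC: "\<forall>\<tau>\<in>{0..1}. C \<tau> = 1 - C (1 - \<tau>)"
    and hA: "\<forall>\<tau>\<in>{0..1}. \<forall>\<sigma>\<in>{0..1}.
               Abar \<tau> \<sigma> = B (1 - \<sigma>) * (1 - C (1 - \<tau>)) - Bbar (1 - \<sigma>) + Abar (1 - \<tau>) (1 - \<sigma>)"
    and hBbar: "\<forall>\<tau>\<in>{0..1}. Bbar \<tau> = B (1 - \<tau>) - Bbar (1 - \<tau>)"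
    and hB: "\<forall>\<tau>\<in>{0..1}. B \<tau> = B (1 - \<tau>)"
    and st: "csRKN_step Abar Bbar B C f h t0 q0 p0 q1 p1"
  shows "csRKN_step Abar Bbar B C f (- h) (t0 + h) q1 p1 q0 p0"
proof -
  obtain Q where Qc: "continuous_on {0..1} Q"
    and QA: "\<forall>\<tau>\<in>{0..1}. Q \<tau> = q0 + (h * C \<tau>) *\<^sub>R p0
            + h\<^sup>2 *\<^sub>R integral {0..1} (\<lambda>\<sigma>. Abar \<tau> \<sigma> *\<^sub>R f (t0 + C \<sigma> * h) (Q \<sigma>))"
    and q1: "q1 = q0 + h *\<^sub>R p0
            + h\<^sup>2 *\<^sub>R integral {0..1} (\<lambda>\<tau>. Bbar \<tau> *\<^sub>R f (t0 + C \<tau> * h) (Q \<tau>))"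
    and p1: "p1 = p0 + h *\<^sub>R integral {0..1} (\<lambda>\<tau>. B \<tau> *\<^sub>R f (t0 + C \<tau> * h) (Q \<tau>))"
    using st unfolding csRKN_step_def by blast
  define F where "F s = f (t0 + C s * h) (Q s)" for s
  have Fc: "continuous_on {0..1} F"
  proof -
    have "continuous_on {0..1} (\<lambda>s. (t0 + C s * h, Q s))"
      by (intro continuous_intros C_cont Qc)
    from continuous_on_compose[OF this continuous_on_subset[OF f_cont]]
    show ?thesis by (simp add: F_def o_def)
  qed
  have int: "(\<lambda>s. a s *\<^sub>R F s) integrable_on {0..1}" if "continuous_on {0..1} a" for a
    by (rule integrable_continuous_real) (intro continuous_intros that Fc)
  have rint: "integral {0..1} (\<lambda>\<sigma>. a \<sigma> *\<^sub>R f (t0 + h + C \<sigma> * - h) (Q (1 - \<sigma>)))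
      = integral {0..1} (\<lambda>\<sigma>. a (1 - \<sigma>) *\<^sub>R F \<sigma>)" if "continuous_on {0..1} (\<lambda>s. a (1 - s))" for a
  proof -
    have "integral {0..1} (\<lambda>\<sigma>. a \<sigma> *\<^sub>R f (t0 + h + C \<sigma> * - h) (Q (1 - \<sigma>)))
        = integral {0..1} (\<lambda>\<sigma>. (\<lambda>s. a (1 - s) *\<^sub>R F s) (1 - \<sigma>))"
    proof (rule integral_cong)
      fix \<sigma> :: real assume "\<sigma> \<in> {0..1}"
      then have "C \<sigma> = 1 - C (1 - \<sigma>)" using hC by blast
      then have eq: "t0 + h + C \<sigma> * - h = t0 + C (1 - \<sigma>) * h" by (simp add: algebra_simps flip: distrib_left)
      then show "a \<sigma> *\<^sub>R f (t0 + h + C \<sigma> * - h) (Q (1 - \<sigma>)) = (\<lambda>s. a (1 - s) *\<^sub>R F s) (1 - \<sigma>)"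
        unfolding F_def eq by simp
    qed
    also have "\<dots> = integral {0..1} (\<lambda>s. a (1 - s) *\<^sub>R F s)"
      by (rule refl01[OF int[OF that]])
    finally show ?thesis .
  qed
  have Brc: "continuous_on {0..1} (\<lambda>s. B (1 - s))"
    by (rule continuous_on_compose2[OF B_cont]) (auto intro!: continuous_intros)
  have Bbrc: "continuous_on {0..1} (\<lambda>s. Bbar (1 - s))"
    by (rule continuous_on_compose2[OF Bbar_cont]) (auto intro!: continuous_intros)
  have IB: "integral {0..1} (\<lambda>s. B (1 - s) *\<^sub>R F s) = integral {0..1} (\<lambda>s. B s *\<^sub>R F s)"
  proof (rule integral_cong)
    fix s :: real assume "s \<in> {0..1}"
    then have "B s = B (1 - s)" using hB by blast
    then show "B (1 - s) *\<^sub>R F s = B s *\<^sub>R F s" by simp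
  qed
  have IBb: "integral {0..1} (\<lambda>s. Bbar (1 - s) *\<^sub>R F s)
     = integral {0..1} (\<lambda>s. B s *\<^sub>R F s) - integral {0..1} (\<lambda>s. Bbar s *\<^sub>R F s)"
  proof -
    have "integral {0..1} (\<lambda>s. Bbar (1 - s) *\<^sub>R F s) = integral {0..1} (\<lambda>s. B s *\<^sub>R F s - Bbar s *\<^sub>R F s)"
    proof (rule integral_cong)
      fix s :: real assume "s \<in> {0..1}"
      then have "1 - s \<in> {0..1}" by auto
      then have "Bbar (1 - s) = B s - Bbar s" using hBbar by fastforce
      then show "Bbar (1 - s) *\<^sub>R F s = B s *\<^sub>R F s - Bbar s *\<^sub>R F s" by (simp add: scaleR_diff_left)
    qed
    also have "\<dots> = integral {0..1} (\<lambda>s. B s *\<^sub>R F s) - integral {0..1} (\<lambda>s. Bbar s *\<^sub>R F s)" by (rule integral_diff[OF int[OF B_cont] int[OF Bbar_cont]])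
    finally show ?thesis .
  qed
  show ?thesis
    unfolding csRKN_step_def
  proof (intro exI[where x="\<lambda>s. Q (1 - s)"] conjI ballI)
    show "continuous_on {0..1} (\<lambda>s. Q (1 - s))"
      by (rule continuous_on_compose2[OF Qc]) (auto intro!: continuous_intros)
  next
    fix \<tau> :: real assume t: "\<tau> \<in> {0..1}"
    then have t1: "1 - \<tau> \<in> {0..1}" by auto
    have Ac: "continuous_on {0..1} (Abar (1 - \<tau>))" using A_cont t1 by blast
    have Arc: "continuous_on {0..1} (\<lambda>s. Abar \<tau> (1 - s))"
      by (rule continuous_on_compose2[OF A_cont[rule_format, OF t]]) (auto intro!: continuous_intros)
    have Ct: "C \<tau> = 1 - C (1 - \<tau>)" using hC t by blast
    have "integral {0..1} (\<lambda>s. Abar \<tau> (1 - s) *\<^sub>R F s)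
       = integral {0..1} (\<lambda>s. C \<tau> *\<^sub>R (B s *\<^sub>R F s) - Bbar s *\<^sub>R F s + Abar (1 - \<tau>) s *\<^sub>R F s)"
    proof (rule integral_cong)
      fix s :: real assume "s \<in> {0..1}"
      then have "1 - s \<in> {0..1}" by auto
      then have eqA: "Abar \<tau> (1 - s) = B s * C \<tau> - Bbar s + Abar (1 - \<tau>) s"
        using hA t Ct by fastforce
      then show "Abar \<tau> (1 - s) *\<^sub>R F s = C \<tau> *\<^sub>R (B s *\<^sub>R F s) - Bbar s *\<^sub>R F s + Abar (1 - \<tau>) s *\<^sub>R F s"
        unfolding eqA by (simp add: algebra_simps)
    qed
    also have "\<dots> = C \<tau> *\<^sub>R integral {0..1} (\<lambda>s. B s *\<^sub>R F s) - integral {0..1} (\<lambda>s. Bbar s *\<^sub>R F s)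
        + integral {0..1} (\<lambda>s. Abar (1 - \<tau>) s *\<^sub>R F s)"
    proof -
      note i1 = int[OF B_cont] and i2 = int[OF Bbar_cont] and i3 = int[OF Ac]
      have i4: "(\<lambda>s. C \<tau> *\<^sub>R (B s *\<^sub>R F s)) integrable_on {0..1}"
        by (rule integrable_cmul[OF i1])
      have i5: "(\<lambda>s. C \<tau> *\<^sub>R (B s *\<^sub>R F s) - Bbar s *\<^sub>R F s) integrable_on {0..1}"
        by (rule integrable_diff[OF i4 i2])
      show ?thesis
        unfolding integral_add[OF i5 i3] integral_diff[OF i4 i2] integral_cmul ..
    qed
    finally have EA: "integral {0..1} (\<lambda>s. Abar \<tau> (1 - s) *\<^sub>R F s) = \<dots>" .
    have Q1: "Q (1 - \<tau>) = q0 + (h * C (1 - \<tau>)) *\<^sub>R p0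
            + h\<^sup>2 *\<^sub>R integral {0..1} (\<lambda>s. Abar (1 - \<tau>) s *\<^sub>R F s)"
      using QA t1 by (simp add: F_def)
    show "Q (1 - \<tau>) = q1 + (- h * C \<tau>) *\<^sub>R p1 +
         (- h)\<^sup>2 *\<^sub>R integral {0..1} (\<lambda>\<sigma>. Abar \<tau> \<sigma> *\<^sub>R f (t0 + h + C \<sigma> * - h) (Q (1 - \<sigma>)))"
      unfolding rint[OF Arc] EA Q1 q1 p1 F_def[symmetric] Ct
      by (simp add: algebra_simps power2_eq_square)
  next
    show "q0 = q1 + - h *\<^sub>R p1 +
         (- h)\<^sup>2 *\<^sub>R integral {0..1} (\<lambda>\<sigma>. Bbar \<sigma> *\<^sub>R f (t0 + h + C \<sigma> * - h) (Q (1 - \<sigma>)))"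
      unfolding rint[OF Bbrc] IBb q1 p1 F_def[symmetric]
      by (simp add: algebra_simps power2_eq_square)
  next
    show "p0 = p1 + - h *\<^sub>R integral {0..1} (\<lambda>\<sigma>. B \<sigma> *\<^sub>R f (t0 + h + C \<sigma> * - h) (Q (1 - \<sigma>)))"
      unfolding rint[OF Brc] IB p1 F_def[symmetric]
      by (simp add: algebra_simps power2_eq_square)
  qed
qed
theorem theorem3p2:
  fixes Abar :: "real \<Rightarrow> real \<Rightarrow> real" and Bbar B C :: "real \<Rightarrow> real"
    and f :: "real \<Rightarrow> 'a::euclidean_space \<Rightarrow> 'a"
  assumes f_cont: "continuous_on UNIV (\<lambda>(t, x). f t x)"
    and A_cont: "\<forall>\<tau>\<in>{0..1}. continuous_on {0..1} (Abar \<tau>)"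
    and Bbar_cont: "continuous_on {0..1} Bbar"
    and B_cont: "continuous_on {0..1} B"
    and C_cont: "continuous_on {0..1} C"
    and hC: "\<forall>\<tau>\<in>{0..1}. C \<tau> = 1 - C (1 - \<tau>)"
    and hA: "\<forall>\<tau>\<in>{0..1}. \<forall>\<sigma>\<in>{0..1}.
               Abar \<tau> \<sigma> = B (1 - \<sigma>) * (1 - C (1 - \<tau>)) - Bbar (1 - \<sigma>) + Abar (1 - \<tau>) (1 - \<sigma>)"
    and hBbar: "\<forall>\<tau>\<in>{0..1}. Bbar \<tau> = B (1 - \<tau>) - Bbar (1 - \<tau>)"
    and hB: "\<forall>\<tau>\<in>{0..1}. B \<tau> = B (1 - \<tau>)"
  shows "csRKN_symmetric Abar Bbar B C f"
proof -
  have 1: "csRKN_step Abar Bbar B C f (- h) (t0 + h) q1 p1 q0 p0"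
    if "csRKN_step Abar Bbar B C f h t0 q0 p0 q1 p1" for h t0 q0 p0 q1 p1
    by (rule one_dir[OF assms that])
  show ?thesis unfolding csRKN_symmetric_def
  proof (intro allI iffI)
    fix h t0 q0 p0 q1 p1
    assume "csRKN_step Abar Bbar B C f (- h) (t0 + h) q1 p1 q0 p0"
    from 1[OF this] show "csRKN_step Abar Bbar B C f h t0 q0 p0 q1 p1" by simp
  qed (rule 1)
qed

end
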